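(* Let $0<\alpha<\pi$, $\varepsilon=e^{i\alpha}$ and $0<c<2$. Then there exists a sequence $(x_n)_{n\ge0}$ of complex numbers with $x_n=e^{i\beta_n}$, $0<\beta_n<\alpha$ for all $n\ge0$, satisfying for every $n\ge0$ $$(n+1)(x_n^2-1)\frac{x_{n+1}+x_n/\varepsilon}{\varepsilon+x_nx_{n+1}}-n\left(1-\frac{x_n^2}{\varepsilon^2}\right)\frac{x_{n-1}+\varepsilon x_n}{\varepsilon+x_{n-1}x_n}=c\,x_n\frac{\varepsilon^2-1}{2\varepsilon^2}$$ (for $n=0$ the second term on the left is omitted).
   Context: This is a discrete Painlevé-type equation; the denominators $\varepsilon+x_nx_{n+1}$ are nonzero along the solution. *)

theory Defs
  imports "HOL-Analysis.Analysis"
begin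

end

theory Submission
  imports Defs
begin

lemma cis_sum2: "cis (u+v) + cis (u-v) = complex_of_real (2 * cos v) * cis u"
  by (simp add: complex_eq_iff cos_add sin_add cos_diff sin_diff algebra_simps)

lemma cis_sq1: "cis b ^ 2 - 1 = 2 * \<i> * complex_of_real (sin b) * cis b"
proof -
  have "cos b * cos b = 1 - sin b * sin b" using sin_cos_squared_add[of b]
    by (simp add: power2_eq_square algebra_simps)
  then show ?thesis by (simp add: complex_eq_iff power2_eq_square algebra_simps)
qed

lemma cis_sq2: "cis a ^ 2 - cis b ^ 2 = 2 * \<i> * complex_of_real (sin (a - b)) * cis b * cis a"
proof -
  have e: "cis a = cis b * cis (a - b)" by (simp add: cis_mult)
  have "cis a ^ 2 - cis b ^ 2 = cis b ^ 2 * (cis (a - b) ^ 2 - 1)"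
    unfolding e by (simp add: algebra_simps power2_eq_square)
  also have "\<dots> = cis b ^ 2 * (2 * \<i> * complex_of_real (sin (a - b)) * cis (a - b))"
    by (simp add: cis_sq1)
  also have "\<dots> = 2 * \<i> * complex_of_real (sin (a - b)) * cis b * (cis b * cis (a - b))"
    by (simp add: power2_eq_square algebra_simps)
  finally show ?thesis using e by simp
qed

lemma final_alg:
  fixes x e :: complex and K Kp sb s' sa c :: real
  assumes e0: "e \<noteq> 0" and x0: "x \<noteq> 0"
    and h1: "x^2 - 1 = 2 * \<i> * complex_of_real sb * x"
    and h2: "e^2 - x^2 = 2 * \<i> * complex_of_real s' * x * e"
    and h3: "e^2 - 1 = 2 * \<i> * complex_of_real sa * e"
    and rel: "K * (real (Suc n) * sb) = c * sa / 2 + real n * s' * Kp"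
  shows "of_nat (Suc n) * (x^2 - 1) * (complex_of_real K / e)
      - of_nat n * (1 - x^2 / e^2) * complex_of_real Kp
      = complex_of_real c * x * ((e^2 - 1) / (2 * e^2))"
proof -
  have a: "1 - x^2 / e^2 = (e^2 - x^2) / e^2" using e0 by (simp add: field_simps)
  have rel': "complex_of_real K * (of_nat (Suc n) * complex_of_real sb)
     = complex_of_real c * complex_of_real sa / 2 + of_nat n * complex_of_real s' * complex_of_real Kp"
    using arg_cong[OF rel, of complex_of_real] by simp
  have "of_nat (Suc n) * (x^2 - 1) * (complex_of_real K / e)
      - of_nat n * (1 - x^2 / e^2) * complex_of_real Kp
      = (2 * \<i> * x / e) * (complex_of_real K * (of_nat (Suc n) * complex_of_real sb)
          - of_nat n * complex_of_real s' * complex_of_real Kp)"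
    unfolding a h1 h2 using e0 by (simp add: field_simps power2_eq_square)
  also have "\<dots> = (2 * \<i> * x / e) * (complex_of_real c * complex_of_real sa / 2)"
    unfolding rel' by simp
  also have "\<dots> = complex_of_real c * x * ((e^2 - 1) / (2 * e^2))"
    unfolding h3 using e0 by (simp add: field_simps power2_eq_square)
  finally show ?thesis .
qed


locale shoot =
  fixes al c :: real
  assumes al0: "0 < al" and alpi: "al < pi" and c0: "0 < c" and c2: "c < 2"
begin

definition "TT = tan (al/2)"
definition qf :: "real \<Rightarrow> real" where "qf b = tan ((al - b)/2)"
definition Kmin :: "real \<Rightarrow> real" where "Kmin b = (1 - TT * qf b)/(1 + TT * qf b)"
definition Gf :: "real \<Rightarrow> real \<Rightarrow> real" where
  "Gf b K = 2 * arctan ((1 - K)/((1 + K) * qf b))"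
definition Kf :: "nat \<Rightarrow> real \<Rightarrow> real \<Rightarrow> real" where
  "Kf n b Kp = (c * sin al / 2 + real n * sin (al - b) * Kp) / (real (Suc n) * sin b)"

fun st :: "real \<Rightarrow> nat \<Rightarrow> real \<times> real" where
  "st x 0 = (x, 0)"
| "st x (Suc n) = (Gf (fst (st x n)) (Kf n (fst (st x n)) (snd (st x n))),
                   Kf n (fst (st x n)) (snd (st x n)))"

definition "bb x n = fst (st x n)"
definition "kp x n = snd (st x n)"
definition "kk x n = Kf n (bb x n) (kp x n)"

lemma bb0[simp]: "bb x 0 = x" and kp0[simp]: "kp x 0 = 0"
  by (simp_all add: bb_def kp_def)
lemma bb_Suc: "bb x (Suc n) = Gf (bb x n) (kk x n)"
  and kp_Suc: "kp x (Suc n) = kk x n"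
  by (simp_all add: bb_def kp_def kk_def)

definition EE :: "real \<Rightarrow> nat \<Rightarrow> real" where
  "EE x n = c * sin al / 2 + real n * sin (al - bb x n) * kp x n - real (Suc n) * sin (bb x n)"
definition EE' :: "real \<Rightarrow> nat \<Rightarrow> real" where
  "EE' x n = c * sin al / 2 + real n * sin (al - bb x n) * kp x n
      - real (Suc n) * sin (bb x n) * Kmin (bb x n)"

definition "PP x N = (\<forall>k<N. 0 < bb x k \<and> bb x k < al \<and> EE x k \<le> 0 \<and> 0 \<le> EE' x k)"
definition "Low x N = (PP x N \<and> 0 \<le> bb x N \<and> bb x N < al \<and> 0 < EE x N)"
definition "High x N = (PP x N \<and> 0 < bb x N \<and> bb x N \<le> al \<and> EE' x N < 0)"

lemma TT_pos: "0 < TT"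
  unfolding TT_def using al0 alpi by (intro tan_gt_zero) auto

lemma arctan_TT: "arctan TT = al/2"
  unfolding TT_def using al0 alpi by (intro arctan_tan) auto

lemma cos_half_pos: "0 \<le> b \<Longrightarrow> b \<le> al \<Longrightarrow> 0 < cos ((al - b)/2)"
  using al0 alpi by (intro cos_gt_zero_pi) auto

lemma qf_pos: "0 \<le> b \<Longrightarrow> b < al \<Longrightarrow> 0 < qf b"
  unfolding qf_def using al0 alpi by (intro tan_gt_zero) auto

lemma qf_nonneg: "0 \<le> b \<Longrightarrow> b \<le> al \<Longrightarrow> 0 \<le> qf b"
  using qf_pos[of b] by (cases "b = al") (auto simp: qf_def)

lemma qf_al: "qf al = 0" by (simp add: qf_def)

lemma Kmin_gt: "0 \<le> b \<Longrightarrow> b \<le> al \<Longrightarrow> -1 < Kmin b"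
proof -
  assume "0 \<le> b" "b \<le> al"
  then have q: "0 \<le> TT * qf b" using qf_nonneg TT_pos by simp
  then show ?thesis unfolding Kmin_def by (simp add: field_simps)
qed

lemma Kmin_le: "0 \<le> b \<Longrightarrow> b \<le> al \<Longrightarrow> Kmin b \<le> 1"
proof -
  assume "0 \<le> b" "b \<le> al"
  then have q: "0 \<le> TT * qf b" using qf_nonneg TT_pos by simp
  then show ?thesis unfolding Kmin_def by (simp add: field_simps)
qed

lemma Kmin_al: "Kmin al = 1" by (simp add: Kmin_def qf_al)

lemma Gf_props:
  assumes b: "0 \<le> b" "b < al" and K: "-1 < K"
  shows "Gf b K \<le> al \<longleftrightarrow> Kmin b \<le> K"
    and "Gf b K < al \<longleftrightarrow> Kmin b < K"
    and "0 \<le> Gf b K \<longleftrightarrow> K \<le> 1"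
    and "0 < Gf b K \<longleftrightarrow> K < 1"
proof -
  have q: "0 < qf b" using qf_pos b by simp
  have d: "0 < (1 + K) * qf b" using q K by simp
  have d2: "0 < 1 + TT * qf b" using q TT_pos by (simp add: add_pos_pos)
  have "Gf b K \<le> al \<longleftrightarrow> arctan ((1 - K)/((1 + K) * qf b)) \<le> arctan TT"
    unfolding Gf_def arctan_TT by auto
  also have "\<dots> \<longleftrightarrow> (1 - K) \<le> TT * ((1 + K) * qf b)"
    using d by (simp add: arctan_le_iff divide_le_eq)
  also have "\<dots> \<longleftrightarrow> Kmin b \<le> K"
    using d2 unfolding Kmin_def by (simp add: divide_le_eq algebra_simps)
  finally show "Gf b K \<le> al \<longleftrightarrow> Kmin b \<le> K" .
  have "Gf b K < al \<longleftrightarrow> arctan ((1 - K)/((1 + K) * qf b)) < arctan TT"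
    unfolding Gf_def arctan_TT by auto
  also have "\<dots> \<longleftrightarrow> (1 - K) < TT * ((1 + K) * qf b)"
    using d by (simp add: arctan_less_iff divide_less_eq)
  also have "\<dots> \<longleftrightarrow> Kmin b < K"
    using d2 unfolding Kmin_def by (simp add: divide_less_eq algebra_simps)
  finally show "Gf b K < al \<longleftrightarrow> Kmin b < K" .
  show "0 \<le> Gf b K \<longleftrightarrow> K \<le> 1"
    using d unfolding Gf_def by (simp add: zero_le_divide_iff)
  show "0 < Gf b K \<longleftrightarrow> K < 1"
    using d unfolding Gf_def by (simp add: zero_less_divide_iff)
qed

lemma num_eq: "sin (bb x n) \<noteq> 0 \<Longrightarrow>
   c * sin al / 2 + real n * sin (al - bb x n) * kp x n = real (Suc n) * sin (bb x n) * kk x n"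
proof -
  assume h: "sin (bb x n) \<noteq> 0"
  have "real (Suc n) * sin (bb x n) \<noteq> 0" using h by simp
  then show ?thesis unfolding kk_def Kf_def by simp
qed

lemma EE_K: "sin (bb x n) \<noteq> 0 \<Longrightarrow> EE x n = real (Suc n) * sin (bb x n) * (kk x n - 1)"
  unfolding EE_def by (simp add: num_eq right_diff_distrib)

lemma EE'_K: "sin (bb x n) \<noteq> 0 \<Longrightarrow> EE' x n = real (Suc n) * sin (bb x n) * (kk x n - Kmin (bb x n))"
  unfolding EE'_def by (simp add: num_eq right_diff_distrib)

lemma sin_pos_b: "0 < b \<Longrightarrow> b < al \<Longrightarrow> 0 < sin b"
  using alpi by (intro sin_gt_zero) auto

lemma EE_le_iff: "0 < b \<Longrightarrow> b < al \<Longrightarrow> bb x n = b \<Longrightarrow> (EE x n \<le> 0 \<longleftrightarrow> kk x n \<le> 1)"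
  using EE_K[of x n] sin_pos_b[of b] by (simp add: mult_le_0_iff)


lemma sin_al_pos: "0 < sin al" using al0 alpi by (intro sin_gt_zero) auto

lemma PP_step:
  assumes "PP x N" "k < N"
  shows "0 < bb x k" "bb x k < al" "0 < sin (bb x k)" "kk x k \<le> 1" "Kmin (bb x k) \<le> kk x k"
    "-1 < kk x k"
proof -
  from assms show b: "0 < bb x k" "bb x k < al" by (auto simp: PP_def)
  then show s: "0 < sin (bb x k)" by (rule sin_pos_b)
  from assms have "EE x k \<le> 0" "0 \<le> EE' x k" by (auto simp: PP_def)
  then show "kk x k \<le> 1" "Kmin (bb x k) \<le> kk x k"
    using EE_K[of x k] EE'_K[of x k] s by (auto simp: mult_le_0_iff zero_le_mult_iff)
  then show "-1 < kk x k" using Kmin_gt[of "bb x k"] b by linarith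
qed

lemma PP_mono: "PP x N \<Longrightarrow> M \<le> N \<Longrightarrow> PP x M"
  by (auto simp: PP_def)

lemma range_bb:
  assumes "x \<in> {0..al}" "PP x N"
  shows "0 \<le> bb x N \<and> bb x N \<le> al"
proof (cases N)
  case 0 then show ?thesis using assms by simp
next
  case (Suc m)
  then have m: "m < N" by simp
  note S = PP_step[OF assms(2) m]
  show ?thesis unfolding Suc bb_Suc
    using Gf_props[of "bb x m" "kk x m"] S by auto
qed

lemma cont_Kmin: fixes x0 :: real shows "0 \<le> b \<Longrightarrow> b \<le> al \<Longrightarrow> isCont f x0 \<Longrightarrow> f x0 = b \<Longrightarrow> isCont (\<lambda>x. Kmin (f x)) x0"
proof -
  assume h: "0 \<le> b" "b \<le> al" "isCont f x0" "f x0 = b"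
  have c: "cos ((al - f x0) / 2) \<noteq> 0" using cos_half_pos h by force
  have d: "1 + TT * tan ((al - f x0) / 2) \<noteq> 0"
    using qf_nonneg[of b] TT_pos h unfolding qf_def
    by (metis add_pos_nonneg less_numeral_extra(1) mult_nonneg_nonneg less_le_not_le order.refl
         order_less_le zero_less_one_class.zero_le_one)
  have ct: "isCont (\<lambda>x. tan ((al - f x) / 2)) x0"
  proof -
    have "isCont (\<lambda>x. (al - f x) / 2) x0"
      by (intro isCont_divide isCont_diff continuous_intros h(3)) simp_all
    from isCont_tan'[OF this] c show ?thesis by simp
  qed
  show ?thesis unfolding Kmin_def qf_def
    by (intro isCont_divide isCont_diff isCont_add isCont_mult continuous_intros ct d)
qed

lemma cont_seq:
  assumes "PP x0 N" "n \<le> N"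
  shows "isCont (\<lambda>x. bb x n) x0 \<and> isCont (\<lambda>x. kp x n) x0"
  using assms(2)
proof (induction n)
  case 0 then show ?case by simp
next
  case (Suc n)
  then have n: "n < N" by simp
  note S = PP_step[OF assms(1) n]
  from Suc have IH: "isCont (\<lambda>x. bb x n) x0" "isCont (\<lambda>x. kp x n) x0" by auto
  have ck: "isCont (\<lambda>x. kk x n) x0"
    unfolding kk_def Kf_def
    using S(3) by (intro isCont_divide isCont_add isCont_mult continuous_intros IH) auto
  have c: "cos ((al - bb x0 n) / 2) \<noteq> 0" using cos_half_pos[of "bb x0 n"] S by force
  have d: "(1 + kk x0 n) * tan ((al - bb x0 n) / 2) \<noteq> 0"
    using qf_pos[of "bb x0 n"] S unfolding qf_def by force
  have "isCont (\<lambda>x. bb x (Suc n)) x0"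
    unfolding bb_Suc Gf_def qf_def
    by (intro isCont_mult isCont_divide isCont_diff isCont_add continuous_intros ck IH c d, simp_all)
  then show ?case using ck by (simp add: kp_Suc)
qed

lemma cont_EE:
  assumes "isCont (\<lambda>x. bb x n) x0" "isCont (\<lambda>x. kp x n) x0"
  shows "isCont (\<lambda>x. EE x n) x0"
  unfolding EE_def by (intro isCont_mult isCont_diff isCont_add continuous_intros assms)

lemma cont_EE':
  assumes "isCont (\<lambda>x. bb x n) x0" "isCont (\<lambda>x. kp x n) x0" "0 \<le> bb x0 n" "bb x0 n \<le> al"
  shows "isCont (\<lambda>x. EE' x n) x0"
  unfolding EE'_def
  by (intro isCont_mult isCont_diff isCont_add continuous_intros assms cont_Kmin[OF assms(3,4)]) auto


lemma ev_gt: fixes f :: "real \<Rightarrow> real"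
  shows "isCont f x0 \<Longrightarrow> a < f x0 \<Longrightarrow> eventually (\<lambda>x. a < f x) (nhds x0)"
proof -
  assume h: "isCont f x0" "a < f x0"
  from h(1) have "(f \<longlongrightarrow> f x0) (nhds x0)"
    unfolding isCont_def tendsto_at_iff_tendsto_nhds .
  from order_tendstoD(1)[OF this h(2)] show ?thesis .
qed

lemma ev_lt: fixes f :: "real \<Rightarrow> real"
  shows "isCont f x0 \<Longrightarrow> f x0 < a \<Longrightarrow> eventually (\<lambda>x. f x < a) (nhds x0)"
proof -
  assume h: "isCont f x0" "f x0 < a"
  from h(1) have "(f \<longlongrightarrow> f x0) (nhds x0)"
    unfolding isCont_def tendsto_at_iff_tendsto_nhds .
  from order_tendstoD(2)[OF this h(2)] show ?thesis .
qed

lemma E'pos_aux: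
  assumes P: "PP x0 N" and k: "k < N" and b: "bb x0 N < al"
  shows "0 < EE' x0 k"
proof -
    note S = PP_step[OF P k]
    have "kk x0 k \<noteq> Kmin (bb x0 k)"
    proof
      assume eq: "kk x0 k = Kmin (bb x0 k)"
      have "bb x0 (Suc k) = al"
      proof -
        have h0: "0 \<le> bb x0 k" using S(1) by simp
        have "Gf (bb x0 k) (kk x0 k) \<le> al" by (subst Gf_props(1)[OF h0 S(2) S(6)]) (simp add: eq)
        moreover have "\<not> Gf (bb x0 k) (kk x0 k) < al" by (subst Gf_props(2)[OF h0 S(2) S(6)]) (simp add: eq)
        ultimately show ?thesis unfolding bb_Suc by simp
      qed
      moreover have "bb x0 (Suc k) < al"
      proof (cases "Suc k < N")
        case True then show ?thesis using P unfolding PP_def by blast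
      next
        case False then have "Suc k = N" using k by simp
        then show ?thesis using b by simp
      qed
      ultimately show False by simp
    qed
    then have "EE' x0 k \<noteq> 0" using EE'_K[of x0 k] S(3) by simp
    moreover have "0 \<le> EE' x0 k" using P k by (auto simp: PP_def)
    ultimately show ?thesis by simp
qed

lemma Low_open:
  assumes x0: "x0 \<in> {0..al}" and L: "Low x0 N"
  shows "\<exists>e>0. \<forall>x\<in>{0..al}. dist x x0 < e \<longrightarrow> (\<exists>M. Low x M)"
proof -
  from L have P: "PP x0 N" and b: "0 \<le> bb x0 N" "bb x0 N < al" and E: "0 < EE x0 N"
    by (auto simp: Low_def)
  have E'pos: "0 < EE' x0 k" if k: "k < N" for k
    using E'pos_aux[OF P k b(2)] .
  have cont: "isCont (\<lambda>x. bb x k) x0 \<and> isCont (\<lambda>x. kp x k) x0" if "k \<le> N" for k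
    using cont_seq[OF P that] .
  have ev1: "eventually (\<lambda>x. \<forall>k\<in>{..<N}. 0 < bb x k \<and> bb x k < al \<and> 0 < EE' x k) (nhds x0)"
  proof (rule eventually_ball_finite)
    show "finite {..<N}" by simp
    show "\<forall>k\<in>{..<N}. eventually (\<lambda>x. 0 < bb x k \<and> bb x k < al \<and> 0 < EE' x k) (nhds x0)"
    proof
      fix k assume "k \<in> {..<N}"
      then have k: "k < N" by simp
      note S = PP_step[OF P k]
      have c1: "isCont (\<lambda>x. bb x k) x0" "isCont (\<lambda>x. kp x k) x0" using cont[of k] k by auto
      have c2: "isCont (\<lambda>x. EE' x k) x0" using cont_EE'[OF c1] S by simp
      have a1: "eventually (\<lambda>x. 0 < bb x k) (nhds x0)" using ev_gt[OF c1(1), of 0] S by simp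
      have a2: "eventually (\<lambda>x. bb x k < al) (nhds x0)" using ev_lt[OF c1(1), of al] S by simp
      have a3: "eventually (\<lambda>x. 0 < EE' x k) (nhds x0)" using ev_gt[OF c2, of 0] E'pos[OF k] by simp
      show "eventually (\<lambda>x. 0 < bb x k \<and> bb x k < al \<and> 0 < EE' x k) (nhds x0)"
        by (intro eventually_conj a1 a2 a3)
    qed
  qed
  have cN: "isCont (\<lambda>x. bb x N) x0" "isCont (\<lambda>x. kp x N) x0" using cont[of N] by auto
  have a1: "eventually (\<lambda>x. 0 < EE x N) (nhds x0)" using ev_gt[OF cont_EE[OF cN], of 0] E by simp
  have a2: "eventually (\<lambda>x. bb x N < al) (nhds x0)" using ev_lt[OF cN(1), of al] b by simp
  have ev2: "eventually (\<lambda>x. 0 < EE x N \<and> bb x N < al) (nhds x0)"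
    by (intro eventually_conj a1 a2)
  define Q where "Q x = ((\<forall>k\<in>{..<N}. 0 < bb x k \<and> bb x k < al \<and> 0 < EE' x k)
        \<and> 0 < EE x N \<and> bb x N < al)" for x
  have "eventually Q (nhds x0)" unfolding Q_def by (rule eventually_conj[OF ev1 ev2])
  then have "\<exists>d>0. \<forall>y. dist y x0 < d \<longrightarrow> Q y" unfolding eventually_nhds_metric .
  then obtain e where e: "e > 0" and H0: "\<And>y. dist y x0 < e \<Longrightarrow> Q y" by blast
  note H = H0[unfolded Q_def]
  show ?thesis
  proof (intro exI[of _ e] conjI e ballI impI)
    fix x assume x: "x \<in> {0..al}" "dist x x0 < e"
    note Hx = H[OF x(2)]
    define j where "j = (LEAST j. 0 < EE x j)"
    have jE: "0 < EE x j" unfolding j_def by (rule LeastI[of _ N]) (use Hx in auto)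
    have jN: "j \<le> N" unfolding j_def by (rule Least_le) (use Hx in auto)
    have lt: "\<not> 0 < EE x k" if "k < j" for k
      using not_less_Least[of k "\<lambda>j. 0 < EE x j"] that unfolding j_def by auto
    have Pj: "PP x j" unfolding PP_def
    proof (intro allI impI)
      fix k assume kj: "k < j"
      then have "k \<in> {..<N}" using jN by simp
      then have "0 < bb x k \<and> bb x k < al \<and> 0 < EE' x k" using Hx by blast
      then show "0 < bb x k \<and> bb x k < al \<and> EE x k \<le> 0 \<and> 0 \<le> EE' x k"
        using lt[OF kj] by simp
    qed
    show "\<exists>M. Low x M"
    proof (cases "j < N")
      case True
      then have "j \<in> {..<N}" by simp
      then have "0 < bb x j \<and> bb x j < al" using Hx by blast
      then have "Low x j" using Pj jE unfolding Low_def by simp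
      then show ?thesis by blast
    next
      case False
      then have "j = N" using jN by simp
      have "0 \<le> bb x j" using range_bb[OF x(1) Pj] by simp
      moreover have "bb x j < al" using Hx \<open>j = N\<close> by simp
      ultimately have "Low x j" using Pj jE unfolding Low_def by simp
      then show ?thesis by blast
    qed
  qed
qed


lemma Epos_aux:
  assumes P: "PP x0 N" and k: "k < N" and b: "0 < bb x0 N"
  shows "EE x0 k < 0"
proof -
    note S = PP_step[OF P k]
    have "kk x0 k \<noteq> 1"
    proof
      assume eq: "kk x0 k = 1"
      have "bb x0 (Suc k) = 0"
      proof -
        have h0: "0 \<le> bb x0 k" using S(1) by simp
        have "0 \<le> Gf (bb x0 k) (kk x0 k)" by (subst Gf_props(3)[OF h0 S(2) S(6)]) (simp add: eq)
        moreover have "\<not> 0 < Gf (bb x0 k) (kk x0 k)" by (subst Gf_props(4)[OF h0 S(2) S(6)]) (simp add: eq)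
        ultimately show ?thesis unfolding bb_Suc by simp
      qed
      moreover have "0 < bb x0 (Suc k)"
      proof (cases "Suc k < N")
        case True then show ?thesis using P unfolding PP_def by blast
      next
        case False then have "Suc k = N" using k by simp
        then show ?thesis using b by simp
      qed
      ultimately show False by simp
    qed
    then have "EE x0 k \<noteq> 0" using EE_K[of x0 k] S(3) by simp
    moreover have "EE x0 k \<le> 0" using P k by (auto simp: PP_def)
    ultimately show ?thesis by simp
qed

lemma High_open:
  assumes x0: "x0 \<in> {0..al}" and L: "High x0 N"
  shows "\<exists>e>0. \<forall>x\<in>{0..al}. dist x x0 < e \<longrightarrow> (\<exists>M. High x M)"
proof -
  from L have P: "PP x0 N" and b: "0 < bb x0 N" "bb x0 N \<le> al" and E: "EE' x0 N < 0"
    by (auto simp: High_def)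
  have Eneg: "EE x0 k < 0" if k: "k < N" for k
    using Epos_aux[OF P k b(1)] .
  have cont: "isCont (\<lambda>x. bb x k) x0 \<and> isCont (\<lambda>x. kp x k) x0" if "k \<le> N" for k
    using cont_seq[OF P that] .
  have ev1: "eventually (\<lambda>x. \<forall>k\<in>{..<N}. 0 < bb x k \<and> bb x k < al \<and> EE x k < 0) (nhds x0)"
  proof (rule eventually_ball_finite)
    show "finite {..<N}" by simp
    show "\<forall>k\<in>{..<N}. eventually (\<lambda>x. 0 < bb x k \<and> bb x k < al \<and> EE x k < 0) (nhds x0)"
    proof
      fix k assume "k \<in> {..<N}"
      then have k: "k < N" by simp
      note S = PP_step[OF P k]
      have c1: "isCont (\<lambda>x. bb x k) x0" "isCont (\<lambda>x. kp x k) x0" using cont[of k] k by auto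
      have c2: "isCont (\<lambda>x. EE x k) x0" using cont_EE[OF c1] by simp
      have a1: "eventually (\<lambda>x. 0 < bb x k) (nhds x0)" using ev_gt[OF c1(1), of 0] S by simp
      have a2: "eventually (\<lambda>x. bb x k < al) (nhds x0)" using ev_lt[OF c1(1), of al] S by simp
      have a3: "eventually (\<lambda>x. EE x k < 0) (nhds x0)" using ev_lt[OF c2, of 0] Eneg[OF k] by simp
      show "eventually (\<lambda>x. 0 < bb x k \<and> bb x k < al \<and> EE x k < 0) (nhds x0)"
        by (intro eventually_conj a1 a2 a3)
    qed
  qed
  have cN: "isCont (\<lambda>x. bb x N) x0" "isCont (\<lambda>x. kp x N) x0" using cont[of N] by auto
  have b0: "0 \<le> bb x0 N" using b by simp
  have a1: "eventually (\<lambda>x. EE' x N < 0) (nhds x0)"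
    using ev_lt[OF cont_EE'[OF cN b0 b(2)], of 0] E by simp
  have a2: "eventually (\<lambda>x. 0 < bb x N) (nhds x0)" using ev_gt[OF cN(1), of 0] b by simp
  have ev2: "eventually (\<lambda>x. EE' x N < 0 \<and> 0 < bb x N) (nhds x0)"
    by (intro eventually_conj a1 a2)
  define Q where "Q x = ((\<forall>k\<in>{..<N}. 0 < bb x k \<and> bb x k < al \<and> EE x k < 0)
        \<and> EE' x N < 0 \<and> 0 < bb x N)" for x
  have "eventually Q (nhds x0)" unfolding Q_def by (rule eventually_conj[OF ev1 ev2])
  then have "\<exists>d>0. \<forall>y. dist y x0 < d \<longrightarrow> Q y" unfolding eventually_nhds_metric .
  then obtain e where e: "e > 0" and H0: "\<And>y. dist y x0 < e \<Longrightarrow> Q y" by blast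
  note H = H0[unfolded Q_def]
  show ?thesis
  proof (intro exI[of _ e] conjI e ballI impI)
    fix x assume x: "x \<in> {0..al}" "dist x x0 < e"
    note Hx = H[OF x(2)]
    define j where "j = (LEAST j. EE' x j < 0)"
    have jE: "EE' x j < 0" unfolding j_def by (rule LeastI[of _ N]) (use Hx in auto)
    have jN: "j \<le> N" unfolding j_def by (rule Least_le) (use Hx in auto)
    have lt: "\<not> EE' x k < 0" if "k < j" for k
      using not_less_Least[of k "\<lambda>j. EE' x j < 0"] that unfolding j_def by auto
    have Pj: "PP x j" unfolding PP_def
    proof (intro allI impI)
      fix k assume kj: "k < j"
      then have "k \<in> {..<N}" using jN by simp
      then have "0 < bb x k \<and> bb x k < al \<and> EE x k < 0" using Hx by blast
      then show "0 < bb x k \<and> bb x k < al \<and> EE x k \<le> 0 \<and> 0 \<le> EE' x k"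
        using lt[OF kj] by simp
    qed
    show "\<exists>M. High x M"
    proof (cases "j < N")
      case True
      then have "j \<in> {..<N}" by simp
      then have "0 < bb x j \<and> bb x j < al" using Hx by blast
      then have "High x j" using Pj jE unfolding High_def by simp
      then show ?thesis by blast
    next
      case False
      then have "j = N" using jN by simp
      have "bb x j \<le> al" using range_bb[OF x(1) Pj] by simp
      moreover have "0 < bb x j" using Hx \<open>j = N\<close> by simp
      ultimately have "High x j" using Pj jE unfolding High_def by simp
      then show ?thesis by blast
    qed
  qed
qed

lemma Low_High_disj: "Low x N \<Longrightarrow> High x M \<Longrightarrow> False"
proof -
  assume L: "Low x N" and H: "High x M"
  consider "N < M" | "M < N" | "N = M" by linarith
  then show False
  proof cases
    case 1 then show False using L H by (auto simp: Low_def High_def PP_def)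
  next
    case 2 then show False using L H by (auto simp: Low_def High_def PP_def)
  next
    case 3
    have b: "0 < bb x N" "bb x N < al" using L H 3 by (auto simp: Low_def High_def)
    have s: "0 < sin (bb x N)" using sin_pos_b[OF b] .
    have "0 < EE x N" "EE' x M < 0" using L H by (auto simp: Low_def High_def)
    then have "1 < kk x N" "kk x N < Kmin (bb x N)"
      using EE_K[of x N] EE'_K[of x N] s 3 by (auto simp: zero_less_mult_iff mult_less_0_iff)
    moreover have "Kmin (bb x N) \<le> 1" using Kmin_le b by simp
    ultimately show False by simp
  qed
qed

lemma coverage:
  assumes x0: "x0 \<in> {0..al}" and nL: "\<not> (\<exists>N. Low x0 N)" and nH: "\<not> (\<exists>N. High x0 N)"
  shows "PP x0 N"
proof (induction N)
  case 0 then show ?case by (simp add: PP_def)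
next
  case (Suc N)
  note P = Suc.IH
  have R: "0 \<le> bb x0 N" "bb x0 N \<le> al" using range_bb[OF x0 P] by auto
  have n0: "bb x0 N \<noteq> 0"
  proof
    assume z: "bb x0 N = 0"
    have kp: "0 \<le> kp x0 N"
    proof (cases N)
      case 0 then show ?thesis by simp
    next
      case (Suc m)
      then have m: "m < N" by simp
      note S = PP_step[OF P m]
      have h0: "0 \<le> bb x0 m" using S(1) by simp
      have "\<not> 0 < Gf (bb x0 m) (kk x0 m)" using z Suc by (simp add: bb_Suc)
      then have "\<not> kk x0 m < 1" using Gf_props(4)[OF h0 S(2) S(6)] by simp
      then show ?thesis using Suc by (simp add: kp_Suc)
    qed
    have "0 < EE x0 N" unfolding EE_def using z kp c0 sin_al_pos
      by (simp add: add_pos_nonneg)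
    then have "Low x0 N" using P z al0 unfolding Low_def by simp
    then show False using nL by blast
  qed
  have na: "bb x0 N \<noteq> al"
  proof
    assume z: "bb x0 N = al"
    have "c * sin al / 2 < real (Suc N) * sin al"
    proof -
      have "c * sin al / 2 < sin al" using c2 sin_al_pos by simp
      also have "\<dots> \<le> real (Suc N) * sin al" using sin_al_pos by simp
      finally show ?thesis .
    qed
    then have "EE' x0 N < 0" unfolding EE'_def using z by (simp add: Kmin_al)
    then have "High x0 N" using P z al0 unfolding High_def by simp
    then show False using nH by blast
  qed
  have b: "0 < bb x0 N" "bb x0 N < al" using R n0 na by auto
  have "\<not> 0 < EE x0 N" using nL P b unfolding Low_def by auto
  moreover have "\<not> EE' x0 N < 0" using nH P b unfolding High_def by auto
  ultimately show ?case using P b unfolding PP_def by (auto simp: less_Suc_eq)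
qed

lemma exists_good: "\<exists>x0. \<forall>N. PP x0 N"
proof -
  define LL where "LL = {x \<in> {0..al}. \<exists>N. Low x N}"
  define HH where "HH = {x \<in> {0..al}. \<exists>N. High x N}"
  have oL: "openin (top_of_set {0..al}) LL"
    unfolding openin_euclidean_subtopology_iff LL_def
    using Low_open by blast
  have oH: "openin (top_of_set {0..al}) HH"
    unfolding openin_euclidean_subtopology_iff HH_def
    using High_open by blast
  have d: "LL \<inter> HH = {}" unfolding LL_def HH_def using Low_High_disj by blast
  have L0: "Low 0 0" unfolding Low_def PP_def EE_def using al0 c0 sin_al_pos by simp
  have "0 \<in> LL" unfolding LL_def using al0 L0 by (simp; blast)
  then have ne1: "LL \<noteq> {}" by auto
  have "c * sin al / 2 < sin al" using c2 sin_al_pos by simp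
  then have H0: "High al 0" unfolding High_def PP_def EE'_def using al0 by (simp add: Kmin_al)
  have "al \<in> HH" unfolding HH_def using al0 H0 by (simp; blast)
  then have ne2: "HH \<noteq> {}" by auto
  have "\<not> {0..al} \<subseteq> LL \<union> HH"
    using connected_openin[THEN iffD1, OF connected_Icc] oL oH d ne1 ne2 by blast
  then obtain x0 where x0: "x0 \<in> {0..al}" "x0 \<notin> LL" "x0 \<notin> HH" by blast
  then have "\<not> (\<exists>N. Low x0 N)" "\<not> (\<exists>N. High x0 N)" unfolding LL_def HH_def by auto
  with coverage[OF x0(1)] show ?thesis by blast
qed


lemma Gf_trig:
  assumes b: "0 \<le> b" "b < al" and K: "-1 < K"
  shows "cos ((al - b + Gf b K)/2) = K * cos ((al - b - Gf b K)/2)"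
proof -
  define A where "A = (al - b)/2"
  define xx where "xx = (1 - K)/((1 + K) * qf b)"
  define B where "B = arctan xx"
  have e1: "(al - b + Gf b K)/2 = A + B" and e2: "(al - b - Gf b K)/2 = A - B"
    unfolding A_def B_def xx_def Gf_def by (simp_all add: field_simps)
  have cA: "cos A \<noteq> 0" using cos_half_pos[of b] b unfolding A_def by simp
  have cB: "cos B \<noteq> 0" unfolding B_def by simp
  have sA: "sin A = qf b * cos A" using cA unfolding qf_def A_def by (simp add: tan_def)
  have sB: "sin B = xx * cos B" using cB tan_arctan[of xx] unfolding B_def by (simp add: tan_def field_simps)
  have q: "0 < qf b" using qf_pos b by simp
  have hx: "xx * ((1 + K) * qf b) = 1 - K" unfolding xx_def using q K by simp
  have h: "1 - qf b * xx = K * (1 + qf b * xx)" using hx by (simp add: algebra_simps)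
  have "cos (A + B) = cos A * cos B * (1 - qf b * xx)"
    by (simp add: cos_add sA sB algebra_simps)
  also have "\<dots> = K * (cos A * cos B * (1 + qf b * xx))" by (simp add: h)
  also have "cos A * cos B * (1 + qf b * xx) = cos (A - B)"
    by (simp add: cos_diff sA sB algebra_simps)
  finally show ?thesis unfolding e1 e2 .
qed

lemma key_complex:
  assumes b: "0 < b" "b < al" and K: "-1 < K" and b': "b' = Gf b K" "0 < b'" "b' < al"
  shows "cis al * cis b' + cis b = complex_of_real K * (cis al + cis b * cis b')"
    and "cis al + cis b * cis b' \<noteq> 0"
proof -
  define u where "u = (al + b + b')/2"
  define v where "v = (al - b + b')/2"
  define w where "w = (al - b - b')/2"
  have uv: "u + v = al + b'" "u - v = b" "u + w = al" "u - w = b + b'"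
    unfolding u_def v_def w_def by (simp_all add: field_simps)
  have 1: "cis al * cis b' + cis b = cis (u + v) + cis (u - v)"
    unfolding uv by (simp add: cis_mult)
  have 2: "cis al + cis b * cis b' = cis (u + w) + cis (u - w)"
    unfolding uv by (simp add: cis_mult)
  have cv: "cos v = K * cos w" unfolding v_def w_def b'(1) using Gf_trig[of b K] b K by simp
  have cw: "0 < cos w" unfolding w_def using b b' alpi al0 by (intro cos_gt_zero_pi) auto
  show "cis al * cis b' + cis b = complex_of_real K * (cis al + cis b * cis b')"
    unfolding 1 2 cis_sum2 cv by simp
  show "cis al + cis b * cis b' \<noteq> 0"
    unfolding 2 cis_sum2 using cw by simp
qed

end

theorem theorem4:
  fixes \<alpha> c :: real
  assumes "0 < \<alpha>" "\<alpha> < pi" "0 < c" "c < 2"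
  defines "\<epsilon> \<equiv> cis \<alpha>"
  shows "\<exists>\<beta> :: nat \<Rightarrow> real. \<exists>x :: nat \<Rightarrow> complex.
     (\<forall>n. x n = cis (\<beta> n) \<and> 0 < \<beta> n \<and> \<beta> n < \<alpha>) \<and>
     (\<forall>n. \<epsilon> + x n * x (Suc n) \<noteq> 0) \<and>
     (\<forall>n. of_nat (Suc n) * ((x n)\<^sup>2 - 1) * ((x (Suc n) + x n / \<epsilon>) / (\<epsilon> + x n * x (Suc n)))
          - (if n = 0 then 0 else
              of_nat n * (1 - (x n)\<^sup>2 / \<epsilon>\<^sup>2) * ((x (n - 1) + \<epsilon> * x n) / (\<epsilon> + x (n - 1) * x n)))
          = complex_of_real c * x n * ((\<epsilon>\<^sup>2 - 1) / (2 * \<epsilon>\<^sup>2)))"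
proof -
  interpret S: shoot \<alpha> c using assms(1-4) by unfold_locales
  obtain x0 where G: "\<And>N. S.PP x0 N" using S.exists_good by blast
  define \<beta> where "\<beta> = S.bb x0"
  define x where "x = (\<lambda>n. cis (\<beta> n))"
  have st: "0 < \<beta> n \<and> \<beta> n < \<alpha> \<and> 0 < sin (\<beta> n) \<and> -1 < S.kk x0 n" for n
    using S.PP_step[OF G[of "Suc n"], of n] unfolding \<beta>_def by simp
  have kc: "\<epsilon> * x (Suc n) + x n = complex_of_real (S.kk x0 n) * (\<epsilon> + x n * x (Suc n))
       \<and> \<epsilon> + x n * x (Suc n) \<noteq> 0" for n
  proof -
    have b': "\<beta> (Suc n) = S.Gf (\<beta> n) (S.kk x0 n)" unfolding \<beta>_def by (simp add: S.bb_Suc)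
    show ?thesis
      using S.key_complex[of "\<beta> n" "S.kk x0 n" "\<beta> (Suc n)"] st[of n] st[of "Suc n"] b'
      unfolding x_def \<epsilon>_def by simp
  qed
  have e0: "\<epsilon> \<noteq> 0" unfolding \<epsilon>_def by simp
  have R: "(x (Suc n) + x n / \<epsilon>) / (\<epsilon> + x n * x (Suc n)) = complex_of_real (S.kk x0 n) / \<epsilon>" for n
  proof -
    have "x (Suc n) + x n / \<epsilon> = (\<epsilon> * x (Suc n) + x n) / \<epsilon>" using e0 by (simp add: field_simps)
    also have "\<dots> = complex_of_real (S.kk x0 n) * (\<epsilon> + x n * x (Suc n)) / \<epsilon>"
      using kc[of n] by simp
    finally show ?thesis using kc[of n] by simp
  qed
  have Sn: "(if n = 0 then 0 else
              of_nat n * (1 - (x n)\<^sup>2 / \<epsilon>\<^sup>2) * ((x (n - 1) + \<epsilon> * x n) / (\<epsilon> + x (n - 1) * x n)))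
       = of_nat n * (1 - (x n)\<^sup>2 / \<epsilon>\<^sup>2) * complex_of_real (S.kp x0 n)" for n
  proof (cases n)
    case 0 then show ?thesis by simp
  next
    case (Suc m)
    have "(x m + \<epsilon> * x (Suc m)) / (\<epsilon> + x m * x (Suc m)) = complex_of_real (S.kk x0 m)"
      using kc[of m] by (simp add: field_simps)
    then show ?thesis using Suc by (simp add: S.kp_Suc)
  qed
  have eq: "of_nat (Suc n) * ((x n)\<^sup>2 - 1) * ((x (Suc n) + x n / \<epsilon>) / (\<epsilon> + x n * x (Suc n)))
          - (if n = 0 then 0 else
              of_nat n * (1 - (x n)\<^sup>2 / \<epsilon>\<^sup>2) * ((x (n - 1) + \<epsilon> * x n) / (\<epsilon> + x (n - 1) * x n)))
          = complex_of_real c * x n * ((\<epsilon>\<^sup>2 - 1) / (2 * \<epsilon>\<^sup>2))" for n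
  proof -
    have rel: "S.kk x0 n * (real (Suc n) * sin (\<beta> n))
        = c * sin \<alpha> / 2 + real n * sin (\<alpha> - \<beta> n) * S.kp x0 n"
      using S.num_eq[of x0 n] st[of n] unfolding \<beta>_def by (simp add: algebra_simps)
    show ?thesis unfolding R Sn
      by (rule final_alg[OF e0 _ _ _ _ rel])
         (simp_all add: x_def \<epsilon>_def cis_sq1 cis_sq2)
  qed
  show ?thesis
    by (intro exI[of _ \<beta>] exI[of _ x] conjI allI eq) (use st kc in \<open>auto simp: x_def\<close>)
qed

end
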